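(* Let $p>1$, $c\in(0,1]$, $X\subset\mathbb{R}^n$, $f(x)=\mathbb{E}[F(x,\xi)]$, and for $x\in X$, $y\in\mathbb{R}$, $z>0$ let \[ \phi(x,y,z)=\frac{c}{z^{p-1}}\mathbb{E}[(F(x,\xi)-y)_+^p]+y+c(p-1)p^{-\frac p{p-1}}z,\qquad h(x)=f(x)+c\,\mathbb{E}^{1/p}[(F(x,\xi)-f(x))_+^p]. \] Then for any $x\in X$ and $y\in\mathbb{R}$, $\Phi(x,y):=\inf_{z>0}\phi(x,y,z)$ is attained at $z=p^{\frac1{p-1}}\mathbb{E}^{1/p}[(F(x,\xi)-y)_+^p]$. Moreover, for any $x\in X$, $\inf_{y\ge f(x),z>0}\phi(x,y,z)=\inf_{y\ge f(x)}\Phi(x,y)=h(x)$, attained at $y=f(x)$ and $z=p^{\frac1{p-1}}\mathbb{E}^{1/p}[(F(x,\xi)-f(x))_+^p]$.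
   Context: $(a)_+=\max\{a,0\}$; $F(x,\xi)$ has finite $p$-th moment for each $x$. *)

theory Defs
  imports "HOL-Probability.Probability"
begin

definition pos_part :: "real \<Rightarrow> real" where
  "pos_part a = max a 0"

definition upmom :: "'b measure \<Rightarrow> ('a \<Rightarrow> 'b \<Rightarrow> real) \<Rightarrow> real \<Rightarrow> 'a \<Rightarrow> real \<Rightarrow> real" where
  "upmom M F p x y = (\<integral>\<xi>. (pos_part (F x \<xi> - y)) powr p \<partial>M)"

definition fexp :: "'b measure \<Rightarrow> ('a \<Rightarrow> 'b \<Rightarrow> real) \<Rightarrow> 'a \<Rightarrow> real" where
  "fexp M F x = (\<integral>\<xi>. F x \<xi> \<partial>M)"

definition phi :: "'b measure \<Rightarrow> ('a \<Rightarrow> 'b \<Rightarrow> real) \<Rightarrow> real \<Rightarrow> real \<Rightarrow> 'a \<Rightarrow> real \<Rightarrow> real \<Rightarrow> real" where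
  "phi M F p c x y z =
     c / (z powr (p - 1)) * upmom M F p x y + y + c * (p - 1) * p powr (- p / (p - 1)) * z"

definition Phi :: "'b measure \<Rightarrow> ('a \<Rightarrow> 'b \<Rightarrow> real) \<Rightarrow> real \<Rightarrow> real \<Rightarrow> 'a \<Rightarrow> real \<Rightarrow> real" where
  "Phi M F p c x y = (INF z\<in>{0<..}. phi M F p c x y z)"

definition hfun :: "'b measure \<Rightarrow> ('a \<Rightarrow> 'b \<Rightarrow> real) \<Rightarrow> real \<Rightarrow> real \<Rightarrow> 'a \<Rightarrow> real" where
  "hfun M F p c x = fexp M F x + c * (upmom M F p x (fexp M F x)) powr (1 / p)"

definition zopt :: "'b measure \<Rightarrow> ('a \<Rightarrow> 'b \<Rightarrow> real) \<Rightarrow> real \<Rightarrow> 'a \<Rightarrow> real \<Rightarrow> real" where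
  "zopt M F p x y = p powr (1 / (p - 1)) * (upmom M F p x y) powr (1 / p)"

end

theory Submission imports Defs begin

lemma bern: fixes s p :: real assumes "s > 0" "p > 1"
  shows "p \<le> s powr (1 - p) + (p - 1) * s"
proof -
  have "s powr (1-p) = exp ((1-p) * ln s)" using assms by (simp add: powr_def)
  also have "\<dots> \<ge> 1 + (1-p) * ln s" by (rule exp_ge_add_one_self)
  finally have 1: "s powr (1-p) \<ge> 1 + (1-p) * ln s" .
  have "ln s \<le> s - 1" using assms by (simp add: ln_le_minus_one)
  hence "(1-p) * ln s \<ge> (1-p) * (s - 1)" using assms by (intro mult_left_mono_neg) auto
  with 1 show ?thesis by (simp add: algebra_simps)
qed

lemma key: fixes a s p c :: real assumes "p > 1" "a > 0" "s > 0"
  shows "c / ((s * (p powr (1/(p-1)) * a)) powr (p-1)) * a powr p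
     + c*(p-1)*p powr (-p/(p-1)) * (s * (p powr (1/(p-1)) * a))
     = c * a * (s powr (1-p) + (p-1) * s) / p"
proof -
  have pp: "p > 0" using assms by simp
  have e1: "(s * (p powr (1/(p-1)) * a)) powr (p-1) = s powr (p-1) * p * a powr (p-1)"
  proof -
    have "(p powr (1/(p-1))) powr (p-1) = p" using assms by (simp add: powr_powr)
    thus ?thesis using assms by (simp add: powr_mult)
  qed
  have e2: "a powr p = a * a powr (p-1)"
  proof -
    have "a powr (1 + (p-1)) = a powr 1 * a powr (p-1)" by (rule powr_add)
    thus ?thesis using assms by simp
  qed
  have e3: "p powr (-p/(p-1)) * p powr (1/(p-1)) = 1 / p"
  proof -
    have "p powr (-p/(p-1)) * p powr (1/(p-1)) = p powr (-p/(p-1) + 1/(p-1))"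
      by (rule powr_add[symmetric])
    also have "-p/(p-1) + 1/(p-1) = -1" using assms by (simp add: field_simps)
    finally show ?thesis using pp by (simp add: powr_minus divide_inverse)
  qed
  have e4: "s powr (1-p) = 1 / s powr (p-1)" using assms
    by (metis minus_diff_eq powr_minus_divide)
  have h1: "c / ((s * (p powr (1/(p-1)) * a)) powr (p-1)) * a powr p = c * a * s powr (1-p) / p"
  proof -
    have gen: "\<And>S A. S > 0 \<Longrightarrow> A > 0 \<Longrightarrow> c / (S * p * A) * (a * A) = c * a * (1 / S) / p"
      using assms by (simp add: field_simps)
    show ?thesis unfolding e1 e2 e4 using assms by (intro gen) auto
  qed
  have h2: "c*(p-1)*p powr (-p/(p-1)) * (s * (p powr (1/(p-1)) * a)) = c * (p-1) * s * a / p"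
  proof -
    have "c*(p-1)*p powr (-p/(p-1)) * (s * (p powr (1/(p-1)) * a)) =
      c * (p-1) * s * a * (p powr (-p/(p-1)) * p powr (1/(p-1)))" by (simp add: algebra_simps)
    also have "\<dots> = c * (p-1) * s * a * (1 / p)" by (simp only: e3)
    finally show ?thesis by simp
  qed
  have "c * a * s powr (1-p) / p + c * (p-1) * s * a / p = c * a * (s powr (1-p) + (p-1) * s) / p"
    by (simp add: diff_divide_distrib add_divide_distrib algebra_simps)
  thus ?thesis by (simp only: h1 h2)
qed

lemma pw: fixes g d t p :: real assumes "0 \<le> g" "0 \<le> d" "0 < t" "t < 1" "1 \<le> p"
  shows "(g + d) powr p \<le> t powr (1-p) * g powr p + (1-t) powr (1-p) * d powr p"
proof -
  have ge1: "u powr (1-p) \<ge> 1" if "0 < u" "u < 1" for u :: real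
  proof -
    have "u powr (p-1) \<le> 1" using that assms by (intro powr_le1) auto
    moreover have "u powr (1-p) = 1 / u powr (p-1)" using that
      by (metis minus_diff_eq powr_minus_divide)
    moreover have "u powr (p-1) > 0" using that by simp
    ultimately show ?thesis by simp
  qed
  show ?thesis
  proof (cases "g = 0 \<or> d = 0")
    case True
    then show ?thesis
    proof
      assume "g = 0"
      moreover have "d powr p \<le> (1-t) powr (1-p) * d powr p"
        using ge1[of "1-t"] assms by (simp add: mult_le_cancel_right1)
      ultimately show ?thesis using assms by simp
    next
      assume "d = 0"
      moreover have "g powr p \<le> t powr (1-p) * g powr p"
        using ge1[of "t"] assms by (simp add: mult_le_cancel_right1)
      ultimately show ?thesis using assms by simp
    qed
  next
    case False
    hence gp: "g > 0" and dp: "d > 0" using assms by auto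
    have "(\<lambda>x. x powr p) ((1 - (1-t)) *\<^sub>R (g/t) + (1-t) *\<^sub>R (d/(1-t)))
       \<le> (1 - (1-t)) * (\<lambda>x. x powr p) (g/t) + (1-t) * (\<lambda>x. x powr p) (d/(1-t))"
      using gp dp assms by (intro convex_onD[OF powr_convex]) auto
    moreover have "(1 - (1-t)) *\<^sub>R (g/t) + (1-t) *\<^sub>R (d/(1-t)) = g + d" using assms by simp
    moreover have "t * (g/t) powr p = t powr (1-p) * g powr p"
      using assms gp by (simp add: powr_divide powr_diff field_simps)
    moreover have "(1-t) * (d/(1-t)) powr p = (1-t) powr (1-p) * d powr p"
      using assms dp by (simp add: powr_divide powr_diff field_simps)
    ultimately show ?thesis by simp
  qed
qed

lemma INF_eqI': fixes g :: "'a \<Rightarrow> real"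
  assumes "S \<noteq> {}" "\<And>s. s \<in> S \<Longrightarrow> h \<le> g s" "\<And>e. e > 0 \<Longrightarrow> \<exists>s\<in>S. g s \<le> h + e"
  shows "(INF s\<in>S. g s) = h"
proof (rule antisym)
  show "h \<le> (INF s\<in>S. g s)" using assms by (intro cINF_greatest) auto
  show "(INF s\<in>S. g s) \<le> h"
  proof (rule field_le_epsilon)
    fix e :: real assume "e > 0"
    then obtain s where "s \<in> S" "g s \<le> h + e" using assms(3) by blast
    moreover have "bdd_below (g ` S)" using assms(2) by (meson bdd_belowI2)
    ultimately show "(INF s\<in>S. g s) \<le> h + e" by (meson cINF_lower order_trans)
  qed
qed

definition Kc :: "real \<Rightarrow> real \<Rightarrow> real" where "Kc p c = c*(p-1)*p powr (-p/(p-1))"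

lemma Kc_pos: "p > 1 \<Longrightarrow> c > 0 \<Longrightarrow> Kc p c > 0" by (simp add: Kc_def)

lemma lowb: fixes U y c p z :: real assumes "U \<ge> 0" "p > 1" "c > 0" "z > 0"
  shows "y + c * U powr (1/p) \<le> c / (z powr (p-1)) * U + y + c*(p-1)*p powr (-p/(p-1)) * z"
proof (cases "U = 0")
  case True
  then show ?thesis using assms by simp
next
  case False
  define a where "a = U powr (1/p)"
  have ap: "a > 0" using False assms by (simp add: a_def)
  have Ua: "U = a powr p" using False assms by (simp add: a_def powr_powr)
  define w where "w = p powr (1/(p-1)) * a"
  have wp: "w > 0" using ap assms by (simp add: w_def)
  define s where "s = z / w"
  have sp: "s > 0" using wp assms by (simp add: s_def)
  have "z = s * w" using wp by (simp add: s_def)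
  hence zs: "z = s * (p powr (1/(p-1)) * a)" by (simp add: w_def)
  have "c / (z powr (p-1)) * U + c*(p-1)*p powr (-p/(p-1)) * z = c * a * (s powr (1-p) + (p-1) * s) / p"
    unfolding zs Ua using key[OF assms(2) ap sp, of c] .
  also have "\<dots> \<ge> c * a * p / p" using bern[OF sp assms(2)] ap assms
    by (intro divide_right_mono mult_left_mono) auto
  finally show ?thesis using assms by (simp add: a_def)
qed

lemma atopt: fixes U y c p :: real assumes "U \<ge> 0" "p > 1" "c > 0"
  shows "c / ((p powr (1/(p-1)) * U powr (1/p)) powr (p-1)) * U + y + c*(p-1)*p powr (-p/(p-1)) * (p powr (1/(p-1)) * U powr (1/p))
    = y + c * U powr (1/p)"
proof (cases "U = 0")
  case True
  then show ?thesis using assms by simp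
next
  case False
  define a where "a = U powr (1/p)"
  have ap: "a > 0" using False assms by (simp add: a_def)
  have Ua: "U = a powr p" using False assms by (simp add: a_def powr_powr)
  have "c / ((1 * (p powr (1/(p-1)) * a)) powr (p-1)) * a powr p + c*(p-1)*p powr (-p/(p-1)) * (1 * (p powr (1/(p-1)) * a))
     = c * a * (1 powr (1-p) + (p-1) * 1) / p"
    using key[OF assms(2) ap, of 1 c] by simp
  also have "\<dots> = c * a" using assms by simp
  finally have calc: "c / ((1 * (p powr (1/(p-1)) * a)) powr (p-1)) * a powr p + c*(p-1)*p powr (-p/(p-1)) * (1 * (p powr (1/(p-1)) * a)) = c * a" .
  show ?thesis unfolding a_def[symmetric] using calc Ua by simp
qed

lemma approxz: fixes U y c p e :: real assumes "U \<ge> 0" "p > 1" "c > 0" "e > 0"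
  shows "\<exists>z\<in>{0<..}. c / (z powr (p-1)) * U + y + c*(p-1)*p powr (-p/(p-1)) * z \<le> y + c * U powr (1/p) + e"
proof (cases "U = 0")
  case True
  have K: "Kc p c > 0" using Kc_pos assms by auto
  show ?thesis
    by (rule bexI[of _ "e / Kc p c"]) (use True K assms in \<open>auto simp: Kc_def\<close>)
next
  case False
  show ?thesis
    by (rule bexI[of _ "p powr (1/(p-1)) * U powr (1/p)"]) (use False assms atopt[OF assms(1-3), of y] in auto)
qed

lemma infz: fixes U y c p :: real assumes "U \<ge> 0" "p > 1" "c > 0"
  shows "(INF z\<in>{0<..}. c / (z powr (p-1)) * U + y + c*(p-1)*p powr (-p/(p-1)) * z) = y + c * U powr (1/p)"
proof (rule INF_eqI')
  show "{0<..} \<noteq> ({}::real set)" by auto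
  show "\<And>z. z \<in> {0<..} \<Longrightarrow> y + c * U powr (1/p) \<le> c / (z powr (p-1)) * U + y + c*(p-1)*p powr (-p/(p-1)) * z"
    using lowb assms by auto
  fix e :: real assume ep: "e > 0"
  show "\<exists>z\<in>{0<..}. c / (z powr (p-1)) * U + y + c*(p-1)*p powr (-p/(p-1)) * z \<le> y + c * U powr (1/p) + e"
  proof (cases "U = 0")
    case True
    have K: "Kc p c > 0" using Kc_pos assms by auto
    show ?thesis
      by (rule bexI[of _ "e / Kc p c"]) (use True K ep in \<open>auto simp: Kc_def\<close>)
  next
    case False
    show ?thesis
      by (rule bexI[of _ "p powr (1/(p-1)) * U powr (1/p)"]) (use False assms ep atopt[OF assms, of y] in auto)
  qed
qed

lemma combo: fixes A d p :: real assumes "A > 0" "d > 0" "p > 1"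
  shows "(A/(A+d)) powr (1-p) * A powr p + (1 - A/(A+d)) powr (1-p) * d powr p = (A+d) powr p"
proof -
  define B where "B = A + d"
  have Bp: "B > 0" using assms by (simp add: B_def)
  have 1: "1 - A/(A+d) = d / B" using Bp by (simp add: B_def field_simps)
  have a1: "A powr (1-p) * A powr p = A" using assms by (simp flip: powr_add)
  have d1: "d powr (1-p) * d powr p = d" using assms by (simp flip: powr_add)
  have "(A/(A+d)) powr (1-p) * A powr p + (1 - A/(A+d)) powr (1-p) * d powr p
      = (A powr (1-p) * A powr p + d powr (1-p) * d powr p) / B powr (1-p)"
  proof -
    have BA: "B - A = d" by (simp add: B_def)
    show ?thesis unfolding 1 B_def[symmetric] using assms Bp by (simp add: powr_divide field_simps BA)
  qed
  also have "\<dots> = B / B powr (1-p)" using a1 d1 by (simp add: B_def)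
  also have "\<dots> = B powr p"
  proof -
    have "B powr (1 - (1-p)) = B powr 1 / B powr (1-p)" by (rule powr_diff)
    thus ?thesis using Bp by simp
  qed
  finally show ?thesis by (simp add: B_def)
qed

lemma half_pow: "(1/2::real) powr (1-p) = 2 powr (p-1)"
  by (simp add: powr_divide powr_minus_divide[symmetric])

lemma integ:
  assumes "prob_space M" "p > 1" "G \<in> borel_measurable M" "integrable M (\<lambda>\<xi>. \<bar>G \<xi>\<bar> powr p)"
  shows "integrable M (\<lambda>\<xi>. pos_part (G \<xi> - y) powr p)"
proof -
  interpret prob_space M by fact
  have meas: "(\<lambda>\<xi>. pos_part (G \<xi> - y) powr p) \<in> borel_measurable M"
    using assms(3) unfolding pos_part_def by measurable
  have "integrable M (\<lambda>\<xi>. 2 powr (p-1) * (\<bar>G \<xi>\<bar> powr p + \<bar>y\<bar> powr p))"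
    using assms(4) by auto
  then show ?thesis
  proof (rule Bochner_Integration.integrable_bound[OF _ meas])
    show "AE \<xi> in M. norm (pos_part (G \<xi> - y) powr p) \<le> norm (2 powr (p-1) * (\<bar>G \<xi>\<bar> powr p + \<bar>y\<bar> powr p))"
    proof (intro AE_I2)
      fix \<xi>
      have "pos_part (G \<xi> - y) powr p \<le> (\<bar>G \<xi>\<bar> + \<bar>y\<bar>) powr p"
        using assms by (intro powr_mono2) (auto simp: pos_part_def)
      also have "\<dots> \<le> (1/2) powr (1-p) * \<bar>G \<xi>\<bar> powr p + (1 - 1/2) powr (1-p) * \<bar>y\<bar> powr p"
        using assms by (intro pw) auto
      also have "\<dots> = 2 powr (p-1) * (\<bar>G \<xi>\<bar> powr p + \<bar>y\<bar> powr p)"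
        by (simp add: half_pow algebra_simps)
      finally show "norm (pos_part (G \<xi> - y) powr p) \<le> norm (2 powr (p-1) * (\<bar>G \<xi>\<bar> powr p + \<bar>y\<bar> powr p))"
        by simp
    qed
  qed
qed

lemma monoN:
  assumes "prob_space M" "p > 1" "G \<in> borel_measurable M" "integrable M (\<lambda>\<xi>. \<bar>G \<xi>\<bar> powr p)"
    and "y \<le> y'"
  shows "(\<integral>\<xi>. pos_part (G \<xi> - y) powr p \<partial>M) powr (1/p)
     \<le> (\<integral>\<xi>. pos_part (G \<xi> - y') powr p \<partial>M) powr (1/p) + (y' - y)"
proof -
  interpret prob_space M by fact
  define U where "U = (\<lambda>y. \<integral>\<xi>. pos_part (G \<xi> - y) powr p \<partial>M)"
  have I: "\<And>y. integrable M (\<lambda>\<xi>. pos_part (G \<xi> - y) powr p)" using integ assms by blast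
  have Unn: "\<And>y. U y \<ge> 0" unfolding U_def by (intro Bochner_Integration.integral_nonneg) auto
  define d where "d = y' - y"
  have d0: "d \<ge> 0" using assms by (simp add: d_def)
  define A where "A = U y' powr (1/p)"
  have ptw: "\<And>\<xi>. pos_part (G \<xi> - y) \<le> pos_part (G \<xi> - y') + d"
    using assms(5) by (auto simp: pos_part_def d_def)
  have ppn: "\<And>z \<xi>. pos_part (G \<xi> - z) \<ge> 0" by (auto simp: pos_part_def)
  have "U y powr (1/p) \<le> A + d"
  proof (cases "d = 0")
    case True
    hence "y = y'" by (simp add: d_def)
    thus ?thesis using True by (simp add: A_def)
  next
    case dne: False
    hence dp: "d > 0" using d0 by simp
    show ?thesis
    proof (cases "A = 0")
      case True
      hence "U y' = 0" using Unn[of y'] by (simp add: A_def)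
      hence "AE \<xi> in M. pos_part (G \<xi> - y') powr p = 0"
        unfolding U_def using I by (subst (asm) integral_nonneg_eq_0_iff_AE) auto
      hence "AE \<xi> in M. pos_part (G \<xi> - y) powr p \<le> d powr p"
      proof (rule AE_mp, intro AE_I2 impI)
        fix \<xi> assume "pos_part (G \<xi> - y') powr p = 0"
        hence "pos_part (G \<xi> - y') = 0" by simp
        hence "pos_part (G \<xi> - y) \<le> d" using ptw[of \<xi>] by simp
        thus "pos_part (G \<xi> - y) powr p \<le> d powr p" using ppn assms by (intro powr_mono2) auto
      qed
      hence "U y \<le> (\<integral>\<xi>. d powr p \<partial>M)" unfolding U_def
        by (intro integral_mono_AE') auto
      hence "U y \<le> d powr p" by (simp add: prob_space)
      hence "U y powr (1/p) \<le> (d powr p) powr (1/p)" using Unn assms by (intro powr_mono2) auto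
      also have "\<dots> = d" using dp assms by (simp add: powr_powr)
      finally show ?thesis using True by simp
    next
      case False
      hence Ap: "A > 0" using Unn[of y'] by (simp add: A_def)
      have UA: "U y' = A powr p" using Unn[of y'] assms by (simp add: A_def powr_powr)
      define t where "t = A / (A + d)"
      have t0: "t > 0" "t < 1" using Ap dp by (auto simp: t_def)
      have "U y \<le> (\<integral>\<xi>. t powr (1-p) * pos_part (G \<xi> - y') powr p + (1-t) powr (1-p) * d powr p \<partial>M)"
        unfolding U_def
      proof (rule integral_mono')
        show "integrable M (\<lambda>\<xi>. t powr (1-p) * pos_part (G \<xi> - y') powr p + (1-t) powr (1-p) * d powr p)"
          using I by auto
        fix \<xi>
        have "pos_part (G \<xi> - y) powr p \<le> (pos_part (G \<xi> - y') + d) powr p"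
          using ptw ppn assms by (intro powr_mono2) auto
        also have "\<dots> \<le> t powr (1-p) * pos_part (G \<xi> - y') powr p + (1-t) powr (1-p) * d powr p"
          using ppn d0 t0 assms by (intro pw) auto
        finally show "pos_part (G \<xi> - y) powr p \<le> t powr (1-p) * pos_part (G \<xi> - y') powr p + (1-t) powr (1-p) * d powr p" .
        show "0 \<le> t powr (1-p) * pos_part (G \<xi> - y') powr p + (1-t) powr (1-p) * d powr p"
          by simp
      qed
      also have "\<dots> = t powr (1-p) * U y' + (1-t) powr (1-p) * d powr p"
        unfolding U_def using I by (simp add: prob_space)
      also have "\<dots> = (A + d) powr p" unfolding UA t_def using combo[OF Ap dp assms(2)] .
      finally have "U y powr (1/p) \<le> ((A + d) powr p) powr (1/p)" using Unn assms by (intro powr_mono2) auto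
      also have "\<dots> = A + d" using Ap dp assms by (simp add: powr_powr)
      finally show ?thesis .
    qed
  qed
  thus ?thesis by (simp add: U_def A_def d_def)
qed

lemma mem_ne: "a \<in> S \<Longrightarrow> S \<noteq> {}" by auto

theorem lemma13:
  fixes M :: "'b measure" and F :: "real ^ 'n \<Rightarrow> 'b \<Rightarrow> real"
    and X :: "(real ^ 'n) set" and p c :: real
  assumes "prob_space M"
    and "p > 1" and "c > 0" and "c \<le> 1"
    and "\<And>x. x \<in> X \<Longrightarrow> F x \<in> borel_measurable M"
    and "\<And>x. x \<in> X \<Longrightarrow> integrable M (\<lambda>\<xi>. \<bar>F x \<xi>\<bar> powr p)"
  shows
    "(\<forall>x\<in>X. \<forall>y::real.
        Phi M F p c x y = phi M F p c x y (zopt M F p x y)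
        \<and> (upmom M F p x y > 0 \<longrightarrow> zopt M F p x y > 0))
     \<and> (\<forall>x\<in>X.
        (INF yz\<in>{(y, z). y \<ge> fexp M F x \<and> z > 0}. phi M F p c x (fst yz) (snd yz)) = hfun M F p c x
        \<and> (INF y\<in>{fexp M F x..}. Phi M F p c x y) = hfun M F p c x
        \<and> Phi M F p c x (fexp M F x) = hfun M F p c x
        \<and> phi M F p c x (fexp M F x) (zopt M F p x (fexp M F x)) = hfun M F p c x)"
proof -
  have Unn: "upmom M F p x y \<ge> 0" for x y
    unfolding upmom_def by (intro Bochner_Integration.integral_nonneg) (auto simp: pos_part_def)
  have Phiv: "Phi M F p c x y = y + c * upmom M F p x y powr (1/p)" for x y
    unfolding Phi_def phi_def using infz[OF Unn assms(2,3)] by simp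
  have phiopt: "phi M F p c x y (zopt M F p x y) = y + c * upmom M F p x y powr (1/p)" for x y
    unfolding phi_def zopt_def using atopt[OF Unn assms(2,3)] by simp
  have philow: "y + c * upmom M F p x y powr (1/p) \<le> phi M F p c x y z" if "z > 0" for x y z
    unfolding phi_def using lowb[OF Unn assms(2,3) that] by simp
  have phiapp: "\<exists>z\<in>{0<..}. phi M F p c x y z \<le> y + c * upmom M F p x y powr (1/p) + e" if "e > 0" for x y e
    unfolding phi_def using approxz[OF Unn assms(2,3) that] by simp
  have hv: "hfun M F p c x = Phi M F p c x (fexp M F x)" for x
    unfolding hfun_def Phiv ..
  have mono: "Phi M F p c x (fexp M F x) \<le> Phi M F p c x y" if "x \<in> X" "fexp M F x \<le> y" for x y
  proof -
    have "upmom M F p x (fexp M F x) powr (1/p) \<le> upmom M F p x y powr (1/p) + (y - fexp M F x)"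
      unfolding upmom_def using monoN[OF assms(1,2) assms(5)[OF that(1)] assms(6)[OF that(1)] that(2)] .
    hence "c * upmom M F p x (fexp M F x) powr (1/p) \<le> c * upmom M F p x y powr (1/p) + c * (y - fexp M F x)"
      using assms(3) by (metis distrib_left mult_left_mono less_imp_le)
    moreover have "c * (y - fexp M F x) \<le> y - fexp M F x"
      using assms(3,4) that(2) by (intro mult_left_le_one_le) auto
    ultimately show ?thesis unfolding Phiv by simp
  qed
  show ?thesis
  proof (intro conjI ballI allI impI)
    fix x y
    show "Phi M F p c x y = phi M F p c x y (zopt M F p x y)" by (simp add: Phiv phiopt)
  next
    fix x y assume "upmom M F p x y > 0"
    thus "zopt M F p x y > 0" using assms(2) by (simp add: zopt_def)
  next
    fix x assume x: "x \<in> X"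
    show "Phi M F p c x (fexp M F x) = hfun M F p c x" by (simp add: hv)
    show "phi M F p c x (fexp M F x) (zopt M F p x (fexp M F x)) = hfun M F p c x"
      by (simp add: hv Phiv phiopt)
    show "(INF y\<in>{fexp M F x..}. Phi M F p c x y) = hfun M F p c x"
    proof (rule INF_eqI')
      show "{fexp M F x..} \<noteq> {}" by auto
      show "\<And>s. s \<in> {fexp M F x..} \<Longrightarrow> hfun M F p c x \<le> Phi M F p c x s"
        using mono x by (auto simp: hv)
      show "\<And>e. e > 0 \<Longrightarrow> \<exists>s\<in>{fexp M F x..}. Phi M F p c x s \<le> hfun M F p c x + e"
        by (rule bexI[of _ "fexp M F x"]) (auto simp: hv)
    qed
    show "(INF yz\<in>{(y, z). y \<ge> fexp M F x \<and> z > 0}. phi M F p c x (fst yz) (snd yz)) = hfun M F p c x"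
    proof (rule INF_eqI')
      show "{(y, z). y \<ge> fexp M F x \<and> (z::real) > 0} \<noteq> {}"
      proof -
        have "(fexp M F x, 1::real) \<in> {(y, z). y \<ge> fexp M F x \<and> z > 0}" by simp
        thus ?thesis by (rule mem_ne)
      qed
    next
      fix s assume "s \<in> {(y, z). y \<ge> fexp M F x \<and> (z::real) > 0}"
      then obtain y z where s: "s = (y, z)" "y \<ge> fexp M F x" "z > 0" by auto
      have "hfun M F p c x \<le> Phi M F p c x y" using mono[OF x s(2)] by (simp add: hv)
      also have "\<dots> \<le> phi M F p c x y z" using philow[OF s(3)] by (simp add: Phiv)
      finally show "hfun M F p c x \<le> phi M F p c x (fst s) (snd s)" by (simp add: s)
    next
      fix e :: real assume ep: "e > 0"
      obtain z where z1: "z \<in> {0<..}" and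
        z2: "phi M F p c x (fexp M F x) z \<le> fexp M F x + c * upmom M F p x (fexp M F x) powr (1/p) + e"
        using phiapp[OF ep, of x "fexp M F x"] by blast
      have "phi M F p c x (fst (fexp M F x, z)) (snd (fexp M F x, z)) \<le> hfun M F p c x + e"
        using z2 unfolding hv Phiv by simp
      moreover have "(fexp M F x, z) \<in> {(y, z). y \<ge> fexp M F x \<and> z > 0}" using z1 by simp
      ultimately show "\<exists>s\<in>{(y, z). y \<ge> fexp M F x \<and> z > 0}. phi M F p c x (fst s) (snd s) \<le> hfun M F p c x + e"
        by blast
    qed
  qed
qed
end
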